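(* There exist $C>0$ and $b_0>0$ such that for all $\theta>0$, all $\nu\in(0,1)$ and all $b>b_0$, $$\mathbb{E}[e^{-\theta\nu H}]\le\frac{C}{1+\frac{\nu}{b^2}e^{b^2/2}},$$ where $H:=\inf\{t\ge0: U(t)\notin(-\frac{b}{\sqrt{2\theta}},\frac{b}{\sqrt{2\theta}})\}$ and $U$ is the Ornstein–Uhlenbeck process $dU(t)=-\theta U(t)dt+dB(t)$, $U(0)=0$, with $B$ a standard Brownian motion. *)

theory Defs
  imports "HOL-Probability.Probability"
begin

definition std_brownian_motion :: "'a measure \<Rightarrow> (real \<Rightarrow> 'a \<Rightarrow> real) \<Rightarrow> bool" where
  "std_brownian_motion M B \<longleftrightarrow>
     prob_space M \<and>
     (\<forall>t\<ge>0. B t \<in> borel_measurable M) \<and>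
     (\<forall>\<omega>\<in>space M. B 0 \<omega> = 0) \<and>
     (\<forall>\<omega>\<in>space M. continuous_on {0..} (\<lambda>t. B t \<omega>)) \<and>
     (\<forall>s t. 0 \<le> s \<and> s < t \<longrightarrow>
        distributed M lborel (\<lambda>\<omega>. B t \<omega> - B s \<omega>) (normal_density 0 (sqrt (t - s)))) \<and>
     (\<forall>(ts :: nat \<Rightarrow> real) n. 0 \<le> ts 0 \<and> (\<forall>i<n. ts i < ts (Suc i)) \<longrightarrow>
        prob_space.indep_vars M (\<lambda>_. borel) (\<lambda>i \<omega>. B (ts (Suc i)) \<omega> - B (ts i) \<omega>) {..<n})"

text \<open>U is the Ornstein--Uhlenbeck process dU = -\<theta> U dt + dB, U(0) = 0, driven by B:
  pathwise (additive noise) this is the integral equation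
  U(t) = -\<theta> \<integral>_0^t U(s) ds + B(t), with continuous paths.\<close>
definition ou_process :: "'a measure \<Rightarrow> real \<Rightarrow> (real \<Rightarrow> 'a \<Rightarrow> real) \<Rightarrow> (real \<Rightarrow> 'a \<Rightarrow> real) \<Rightarrow> bool" where
  "ou_process M \<theta> B U \<longleftrightarrow>
     (\<forall>\<omega>\<in>space M. continuous_on {0..} (\<lambda>t. U t \<omega>) \<and>
        (\<forall>t\<ge>0. U t \<omega> = - \<theta> * integral {0..t} (\<lambda>s. U s \<omega>) + B t \<omega>))"

definition exit_time :: "real \<Rightarrow> (real \<Rightarrow> real) \<Rightarrow> ereal" where
  "exit_time a u = Inf {ereal t | t. t \<ge> 0 \<and> u t \<notin> {-a<..<a}}"

definition exp_neg :: "real \<Rightarrow> ereal \<Rightarrow> real" where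
  "exp_neg c h = (if h = \<infinity> then 0 else exp (- c * real_of_ereal h))"

end

theory Submission
  imports Defs
begin

lemma normal_nn_integral_1:
  assumes "\<sigma> > 0"
  shows "(\<integral>\<^sup>+x. ennreal (normal_density \<mu> \<sigma> x) \<partial>lborel) = 1"
proof -
  interpret p: prob_space "density lborel (\<lambda>x. ennreal (normal_density \<mu> \<sigma> x))"
    using prob_space_normal_density[OF assms] .
  have "emeasure (density lborel (\<lambda>x. ennreal (normal_density \<mu> \<sigma> x))) UNIV = 1"
    using p.emeasure_space_1 by simp
  then show ?thesis
    by (subst (asm) emeasure_density) auto
qed

lemma gauss_mgf:
  assumes D: "distributed M lborel Y (\<lambda>x. ennreal (normal_density 0 \<sigma> x))" and s: "\<sigma> > 0"
  shows "(\<integral>\<^sup>+\<omega>. ennreal (exp (\<mu> * Y \<omega>)) \<partial>M) = ennreal (exp (\<mu>\<^sup>2 * \<sigma>\<^sup>2 / 2))"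
proof -
  have "(\<integral>\<^sup>+\<omega>. ennreal (exp (\<mu> * Y \<omega>)) \<partial>M)
      = (\<integral>\<^sup>+x. ennreal (normal_density 0 \<sigma> x) * ennreal (exp (\<mu>*x)) \<partial>lborel)"
    using distributed_nn_integral[OF D, of "\<lambda>x. ennreal (exp (\<mu>*x))"] by simp
  also have "\<dots> = (\<integral>\<^sup>+x. ennreal (exp (\<mu>\<^sup>2 * \<sigma>\<^sup>2 / 2)) * ennreal (normal_density (\<mu>*\<sigma>\<^sup>2) \<sigma> x) \<partial>lborel)"
  proof (rule nn_integral_cong)
    fix x :: real
    have "exp (- (x - 0)\<^sup>2 / (2 * \<sigma>\<^sup>2)) * exp (\<mu>*x) = exp (\<mu>\<^sup>2 * \<sigma>\<^sup>2 / 2) * exp (- (x - \<mu>*\<sigma>\<^sup>2)\<^sup>2 / (2 * \<sigma>\<^sup>2))"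
      unfolding exp_add[symmetric] using s
      by (intro arg_cong[where f=exp]) (simp add: field_simps power2_eq_square)
    then have "normal_density 0 \<sigma> x * exp (\<mu>*x) = exp (\<mu>\<^sup>2 * \<sigma>\<^sup>2 / 2) * normal_density (\<mu>*\<sigma>\<^sup>2) \<sigma> x"
      unfolding normal_density_def by (simp add: algebra_simps)
    then show "ennreal (normal_density 0 \<sigma> x) * ennreal (exp (\<mu>*x)) = ennreal (exp (\<mu>\<^sup>2 * \<sigma>\<^sup>2 / 2)) * ennreal (normal_density (\<mu>*\<sigma>\<^sup>2) \<sigma> x)"
      by (simp add: ennreal_mult'[symmetric] ennreal_mult[symmetric] normal_density_nonneg)
  qed
  also have "\<dots> = ennreal (exp (\<mu>\<^sup>2 * \<sigma>\<^sup>2 / 2))"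
    by (subst nn_integral_cmult) (auto simp: normal_nn_integral_1[OF s])
  finally show ?thesis .
qed

lemma indep_var_nn_integral:
  fixes F G :: "'a \<Rightarrow> ennreal"
  assumes P: "prob_space M" and ind: "prob_space.indep_var M borel F borel G"
  shows "(\<integral>\<^sup>+\<omega>. F \<omega> * G \<omega> \<partial>M) = (\<integral>\<^sup>+\<omega>. F \<omega> \<partial>M) * (\<integral>\<^sup>+\<omega>. G \<omega> \<partial>M)"
proof -
  interpret prob_space M by fact
  have *: "(\<lambda>\<omega>. F \<omega> * G \<omega>) = (\<lambda>\<omega>. \<Prod>i\<in>UNIV. (case_bool F G i \<omega>))"
    by (simp add: UNIV_bool mult.commute)
  have **: "(\<lambda> _. borel) = case_bool borel borel"
    by (rule ext, metis (full_types) bool.simps(3) bool.simps(4))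
  have "indep_vars (\<lambda>_. borel) (case_bool F G) UNIV"
    by (subst **, subst indep_var_def [symmetric], rule ind)
  then show ?thesis
    apply (subst *)
    apply (subst indep_vars_nn_integral)
    apply (auto simp: UNIV_bool mult.commute)
    done
qed

lemma maximal_ineq:
  fixes X :: "nat \<Rightarrow> 'a \<Rightarrow> real"
  assumes P: "prob_space M"
    and ind: "prob_space.indep_vars M (\<lambda>_. borel) X {..<n}"
    and mgf: "\<And>l \<mu>. l < n \<Longrightarrow> (\<integral>\<^sup>+\<omega>. ennreal (exp (\<mu> * X l \<omega>)) \<partial>M) = ennreal (exp (\<mu>\<^sup>2 * v l / 2))"
    and vpos: "\<And>l. l < n \<Longrightarrow> v l \<ge> 0"
    and x: "x > 0" and V: "(\<Sum>l<n. v l) \<le> V" and Vp: "V > 0"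
  shows "emeasure M {\<omega>\<in>space M. \<exists>i\<le>n. x < (\<Sum>l<i. X l \<omega>)} \<le> ennreal (exp (- x\<^sup>2 / (2*V)))"
proof -
  interpret prob_space M by fact
  have Xm: "X l \<in> borel_measurable M" if "l < n" for l
    using ind that unfolding indep_vars_def by auto
  define lam where "lam = x / V"
  have lam: "lam > 0" using x Vp by (simp add: lam_def)
  define S where "S i \<omega> = (\<Sum>l<i. X l \<omega>)" for i \<omega>
  define A where "A j = {\<omega>\<in>space M. x < S j \<omega> \<and> (\<forall>i<j. S i \<omega> \<le> x)}" for j
  have Sm: "S i \<in> borel_measurable M" if "i \<le> n" for i
    unfolding S_def using that by (intro borel_measurable_sum Xm) auto
  have Am: "A j \<in> sets M" if "j \<le> n" for j
  proof -
    have "A j = {\<omega>\<in>space M. x < S j \<omega>} \<inter> (\<Inter>i\<in>{..<j}. {\<omega>\<in>space M. S i \<omega> \<le> x})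
       \<inter> space M"
      unfolding A_def by auto
    also have "\<dots> \<in> sets M"
      using that Sm by (cases "j = 0") (auto intro!: sets.Int sets.finite_INT borel_measurable_le borel_measurable_less)
    finally show ?thesis .
  qed
  have cover: "{\<omega>\<in>space M. \<exists>i\<le>n. x < S i \<omega>} \<subseteq> (\<Union>j\<in>{..n}. A j)"
  proof
    fix \<omega> assume "\<omega> \<in> {\<omega>\<in>space M. \<exists>i\<le>n. x < S i \<omega>}"
    then obtain i where i: "i \<le> n" "x < S i \<omega>" "\<omega> \<in> space M" by auto
    define j where "j = (LEAST i. x < S i \<omega>)"
    have j1: "x < S j \<omega>" unfolding j_def by (rule LeastI[of _ i]) (use i in auto)
    have j2: "j \<le> i" unfolding j_def by (rule Least_le) (use i in auto)
    have j3: "\<forall>i'<j. S i' \<omega> \<le> x" unfolding j_def using not_less_Least by force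
    show "\<omega> \<in> (\<Union>j\<in>{..n}. A j)" using j1 j2 j3 i unfolding A_def by auto
  qed
  have disj: "disjoint_family_on A {..n}"
    unfolding disjoint_family_on_def A_def
    by (auto; metis linorder_neqE_nat not_le)
  define Z where "Z \<omega> = ennreal (exp (lam * S n \<omega>))" for \<omega>
  have indE: "indep_vars (\<lambda>_. borel) (\<lambda>l \<omega>. ennreal (exp (lam * X l \<omega>))) {..<n}"
    by (rule indep_vars_compose2[OF ind]) auto
  have prodE: "(\<integral>\<^sup>+\<omega>. (\<Prod>l\<in>K. ennreal (exp (lam * X l \<omega>))) \<partial>M) = ennreal (exp (lam\<^sup>2 * (\<Sum>l\<in>K. v l) / 2))"
    if K: "K \<subseteq> {..<n}" for K
  proof -
    have fin: "finite K" using K finite_subset by blast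
    have "(\<integral>\<^sup>+\<omega>. (\<Prod>l\<in>K. ennreal (exp (lam * X l \<omega>))) \<partial>M) = (\<Prod>l\<in>K. ennreal (exp (lam\<^sup>2 * v l / 2)))"
      apply (subst indep_vars_nn_integral[OF fin indep_vars_subset[OF indE K]])
      using K mgf by (auto intro!: prod.cong)
    also have "\<dots> = ennreal (\<Prod>l\<in>K. exp (lam\<^sup>2 * v l / 2))"
      by (rule prod_ennreal) auto
    also have "(\<Prod>l\<in>K. exp (lam\<^sup>2 * v l / 2)) = exp (\<Sum>l\<in>K. lam\<^sup>2 * v l / 2)"
      using fin by (simp add: exp_sum)
    also have "(\<Sum>l\<in>K. lam\<^sup>2 * v l / 2) = lam\<^sup>2 * (\<Sum>l\<in>K. v l) / 2"
      by (simp add: sum_distrib_left sum_divide_distrib)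
    finally show ?thesis .
  qed
  have expS: "ennreal (exp (lam * (\<Sum>l\<in>K. X l \<omega>))) = (\<Prod>l\<in>K. ennreal (exp (lam * X l \<omega>)))"
    if "finite K" for K \<omega>
    using that by (simp add: sum_distrib_left exp_sum prod_ennreal)
  have step: "ennreal (exp (lam * x)) * emeasure M (A j) \<le> (\<integral>\<^sup>+\<omega>. indicator (A j) \<omega> * Z \<omega> \<partial>M)"
    if j: "j \<le> n" for j
  proof -
    define f where "f \<omega> = indicator (A j) \<omega> * ennreal (exp (lam * S j \<omega>))" for \<omega>
    define g where "g \<omega> = ennreal (exp (lam * (\<Sum>l\<in>{j..<n}. X l \<omega>)))" for \<omega>
    have "ennreal (exp (lam * x)) * emeasure M (A j) = (\<integral>\<^sup>+\<omega>. ennreal (exp (lam * x)) * indicator (A j) \<omega> \<partial>M)"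
      using Am[OF j] by (simp add: nn_integral_cmult_indicator)
    also have "\<dots> \<le> (\<integral>\<^sup>+\<omega>. f \<omega> \<partial>M)"
      unfolding f_def using lam
      by (intro nn_integral_mono) (auto simp: A_def indicator_def mult.commute)
    also have "\<dots> = (\<integral>\<^sup>+\<omega>. f \<omega> \<partial>M) * 1" by simp
    also have "\<dots> \<le> (\<integral>\<^sup>+\<omega>. f \<omega> \<partial>M) * (\<integral>\<^sup>+\<omega>. g \<omega> \<partial>M)"
    proof (rule mult_left_mono)
      have "(\<integral>\<^sup>+\<omega>. g \<omega> \<partial>M) = ennreal (exp (lam\<^sup>2 * (\<Sum>l\<in>{j..<n}. v l) / 2))"
        unfolding g_def by (subst expS) (auto intro!: prodE)
      moreover have "(\<Sum>l\<in>{j..<n}. v l) \<ge> 0" using vpos by (auto intro!: sum_nonneg)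
      ultimately show "1 \<le> (\<integral>\<^sup>+\<omega>. g \<omega> \<partial>M)" by simp
    qed simp
    also have "\<dots> = (\<integral>\<^sup>+\<omega>. f \<omega> * g \<omega> \<partial>M)"
    proof -
      define F where "F u = indicator {u. x < (\<Sum>l<j. u l) \<and> (\<forall>i<j. (\<Sum>l<i. u l) \<le> x)} u
           * ennreal (exp (lam * (\<Sum>l<j. u l)))" for u :: "nat \<Rightarrow> real"
      define G where "G u = ennreal (exp (lam * (\<Sum>l\<in>{j..<n}. u l)))" for u :: "nat \<Rightarrow> real"
      have Fm: "F \<in> borel_measurable (PiM {..<j} (\<lambda>_. borel))"
        unfolding F_def by measurable
      have Gm: "G \<in> borel_measurable (PiM {j..<n} (\<lambda>_. borel))"
        unfolding G_def by measurable
      have iv: "indep_var borel (F \<circ> (\<lambda>\<omega>. restrict (\<lambda>i. X i \<omega>) {..<j})) borel (G \<circ> (\<lambda>\<omega>. restrict (\<lambda>i. X i \<omega>) {j..<n}))"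
        by (rule indep_var_compose[OF indep_var_restrict[OF ind] Fm Gm]) (use j in auto)
      have eqf: "f \<omega> = (F \<circ> (\<lambda>\<omega>. restrict (\<lambda>i. X i \<omega>) {..<j})) \<omega>" if "\<omega> \<in> space M" for \<omega>
        using that unfolding f_def F_def A_def S_def by (auto simp: indicator_def)
      have eqg: "g \<omega> = (G \<circ> (\<lambda>\<omega>. restrict (\<lambda>i. X i \<omega>) {j..<n})) \<omega>" for \<omega>
        unfolding g_def G_def by auto
      have "(\<integral>\<^sup>+\<omega>. f \<omega> * g \<omega> \<partial>M) = (\<integral>\<^sup>+\<omega>. (F \<circ> (\<lambda>\<omega>. restrict (\<lambda>i. X i \<omega>) {..<j})) \<omega> * (G \<circ> (\<lambda>\<omega>. restrict (\<lambda>i. X i \<omega>) {j..<n})) \<omega> \<partial>M)"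
        using eqf eqg by (intro nn_integral_cong) auto
      also have "\<dots> = (\<integral>\<^sup>+\<omega>. (F \<circ> (\<lambda>\<omega>. restrict (\<lambda>i. X i \<omega>) {..<j})) \<omega> \<partial>M) * (\<integral>\<^sup>+\<omega>. (G \<circ> (\<lambda>\<omega>. restrict (\<lambda>i. X i \<omega>) {j..<n})) \<omega> \<partial>M)"
        by (rule indep_var_nn_integral[OF P iv])
      also have "\<dots> = (\<integral>\<^sup>+\<omega>. f \<omega> \<partial>M) * (\<integral>\<^sup>+\<omega>. g \<omega> \<partial>M)"
        using eqf eqg by (intro arg_cong2[where f="(*)"] nn_integral_cong) auto
      finally show ?thesis by simp
    qed
    also have "\<dots> = (\<integral>\<^sup>+\<omega>. indicator (A j) \<omega> * Z \<omega> \<partial>M)"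
    proof (intro nn_integral_cong)
      fix \<omega>
      have "S n \<omega> = S j \<omega> + (\<Sum>l\<in>{j..<n}. X l \<omega>)"
        unfolding S_def using j by (metis atLeast0LessThan sum.atLeastLessThan_concat zero_le)
      then show "f \<omega> * g \<omega> = indicator (A j) \<omega> * Z \<omega>"
        unfolding f_def g_def Z_def
        by (simp add: distrib_left exp_add ennreal_mult'' mult.assoc)
    qed
    finally show ?thesis .
  qed
  have "ennreal (exp (lam * x)) * emeasure M {\<omega>\<in>space M. \<exists>i\<le>n. x < S i \<omega>}
      \<le> ennreal (exp (lam * x)) * emeasure M (\<Union>j\<in>{..n}. A j)"
    using Am by (intro mult_left_mono emeasure_mono cover) auto
  also have "\<dots> \<le> ennreal (exp (lam * x)) * (\<Sum>j\<in>{..n}. emeasure M (A j))"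
    using Am by (intro mult_left_mono emeasure_subadditive_finite) auto
  also have "\<dots> = (\<Sum>j\<in>{..n}. ennreal (exp (lam * x)) * emeasure M (A j))"
    by (simp add: sum_distrib_left)
  also have "\<dots> \<le> (\<Sum>j\<in>{..n}. \<integral>\<^sup>+\<omega>. indicator (A j) \<omega> * Z \<omega> \<partial>M)"
    by (intro sum_mono step) auto
  also have "\<dots> = (\<integral>\<^sup>+\<omega>. (\<Sum>j\<in>{..n}. indicator (A j) \<omega> * Z \<omega>) \<partial>M)"
    using Am Sm unfolding Z_def by (intro nn_integral_sum[symmetric]) auto
  also have "\<dots> \<le> (\<integral>\<^sup>+\<omega>. Z \<omega> \<partial>M)"
  proof (intro nn_integral_mono)
    fix \<omega>
    have "(\<Sum>j\<in>{..n}. indicator (A j) \<omega> * Z \<omega>) = indicator (\<Union>j\<in>{..n}. A j) \<omega> * Z \<omega>"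
      by (simp add: sum_distrib_right indicator_UN_disjoint[OF _ disj])
    also have "\<dots> \<le> Z \<omega>" by (simp add: indicator_def)
    finally show "(\<Sum>j\<in>{..n}. indicator (A j) \<omega> * Z \<omega>) \<le> Z \<omega>" .
  qed
  also have "\<dots> = ennreal (exp (lam\<^sup>2 * (\<Sum>l<n. v l) / 2))"
    unfolding Z_def S_def by (subst expS) (auto intro!: prodE)
  also have "\<dots> \<le> ennreal (exp (lam\<^sup>2 * V / 2))"
    using V by (intro ennreal_leI) (auto intro!: mult_left_mono simp: divide_right_mono)
  finally have main: "ennreal (exp (lam * x)) * emeasure M {\<omega>\<in>space M. \<exists>i\<le>n. x < S i \<omega>} \<le> ennreal (exp (lam\<^sup>2 * V / 2))" .
  have "emeasure M {\<omega>\<in>space M. \<exists>i\<le>n. x < S i \<omega>}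
      = ennreal (exp (- (lam * x))) * (ennreal (exp (lam * x)) * emeasure M {\<omega>\<in>space M. \<exists>i\<le>n. x < S i \<omega>})"
    by (simp add: mult.assoc[symmetric] ennreal_mult''[symmetric] exp_add[symmetric])
  also have "\<dots> \<le> ennreal (exp (- (lam * x))) * ennreal (exp (lam\<^sup>2 * V / 2))"
    by (intro mult_left_mono main) auto
  also have "\<dots> = ennreal (exp (- x\<^sup>2 / (2*V)))"
    using Vp by (simp add: ennreal_mult''[symmetric] exp_add[symmetric] lam_def field_simps power2_eq_square)
  finally show ?thesis unfolding S_def .
qed

lemma sum_by_parts_nat:
  fixes p q :: "nat \<Rightarrow> real"
  shows "(\<Sum>l<n. p l * (q (Suc l) - q l)) = p n * q n - p 0 * q 0 - (\<Sum>l<n. q (Suc l) * (p (Suc l) - p l))"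
  by (induction n) (auto simp: algebra_simps)

lemma path_conv:
  fixes b u :: "real \<Rightarrow> real"
  assumes cu: "continuous_on {0..} u" and cb: "continuous_on {0..} b" and b0: "b 0 = 0"
    and eq: "\<And>s. s \<ge> 0 \<Longrightarrow> u s = - \<theta> * integral {0..s} u + b s"
    and th: "\<theta> > 0" and tp: "t > 0"
  shows "(\<lambda>n. \<Sum>l<n. exp (\<theta> * (real l * t / real n)) * (b (real (Suc l) * t / real n) - b (real l * t / real n)))
          \<longlonglongrightarrow> exp (\<theta> * t) * u t"
proof -
  define F where "F s = integral {0..s} u" for s
  define K where "K s = exp (\<theta> * s) * F s" for s
  define c where "c s = exp (\<theta> * s)" for s
  have F0: "F 0 = 0" unfolding F_def by simp
  have cbt: "continuous_on {0..t} b" using cb by (rule continuous_on_subset) auto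
  have cut: "continuous_on {0..t} u" using cu by (rule continuous_on_subset) auto
  have Fc: "continuous_on {0..t} F" unfolding F_def
    by (rule indefinite_integral_continuous_1) (rule integrable_continuous_real[OF cut])
  have Kc: "continuous_on {0..t} K" unfolding K_def
    by (intro continuous_intros Fc)
  have Fd: "(F has_real_derivative u s) (at s)" if "s > 0" for s
  proof -
    have "continuous_on {0..s+1} u" using cu by (rule continuous_on_subset) auto
    from integral_has_real_derivative[OF this, of s] that
    have "(F has_real_derivative u s) (at s within {0..s+1})" unfolding F_def by auto
    then show ?thesis using that by (simp add: at_within_Icc_at)
  qed
  have Kd: "(K has_real_derivative (c s * b s)) (at s)" if "s > 0" for s
  proof -
    have "(K has_real_derivative (exp (\<theta> * s) * (\<theta> * 1)) * F s + exp (\<theta> * s) * u s) (at s)"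
    proof -
      have e: "((\<lambda>s. exp (\<theta> * s)) has_real_derivative exp (\<theta> * s) * (\<theta> * 1)) (at s)"
        by (auto intro!: derivative_eq_intros)
      show ?thesis unfolding K_def using DERIV_mult[OF e Fd[OF that]] by (simp add: mult.commute)
    qed
    moreover have "(exp (\<theta> * s) * (\<theta> * 1)) * F s + exp (\<theta> * s) * u s = c s * b s"
    proof -
      have h: "b s = u s + \<theta> * F s" using eq[of s] that unfolding F_def by simp
      show ?thesis unfolding c_def h by (simp add: algebra_simps)
    qed
    ultimately show ?thesis by simp
  qed
  have cd: "(c has_real_derivative (\<theta> * c s)) (at s)" for s
  proof -
    have "(c has_real_derivative (exp (\<theta> * s) * (\<theta> * 1))) (at s)"
      unfolding c_def by (auto intro!: derivative_eq_intros)
    then show ?thesis by (simp add: c_def mult.commute)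
  qed
  have target: "exp (\<theta> * t) * u t = c t * b t - \<theta> * K t"
  proof -
    have h: "b t = u t + \<theta> * F t" using eq[of t] tp unfolding F_def by simp
    show ?thesis unfolding c_def K_def h by (simp add: algebra_simps)
  qed
  obtain Bb where Bb: "\<And>s. s \<in> {0..t} \<Longrightarrow> \<bar>b s\<bar> \<le> Bb"
  proof -
    have "compact (b ` {0..t})" by (intro compact_continuous_image cbt) auto
    then obtain Bb where "\<forall>y\<in>b ` {0..t}. norm y \<le> Bb" using compact_imp_bounded bounded_iff by metis
    then have "\<And>s. s \<in> {0..t} \<Longrightarrow> \<bar>b s\<bar> \<le> Bb" by auto
    then show ?thesis by (rule that)
  qed
  have Bb0: "Bb \<ge> 0" using Bb[of 0] tp by auto
  have ucb: "uniformly_continuous_on {0..t} b" by (rule compact_uniformly_continuous[OF cbt]) auto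
  have ucc: "uniformly_continuous_on {0..t} c" unfolding c_def
    by (rule compact_uniformly_continuous) (auto intro!: continuous_intros)
  define K0 where "K0 = Bb + c t"
  have K0: "K0 > 0" unfolding K0_def c_def using Bb0 by (simp add: add_nonneg_pos)
  show ?thesis
    unfolding lim_sequentially
  proof (intro allI impI)
    fix r :: real assume r: "r > 0"
    define e where "e = r / (2 * t * \<theta> * K0)"
    have e: "e > 0" unfolding e_def using r tp th K0 by auto
    obtain d1 where d1: "d1 > 0" "\<And>x x'. x \<in> {0..t} \<Longrightarrow> x' \<in> {0..t} \<Longrightarrow> dist x' x < d1 \<Longrightarrow> dist (b x') (b x) < e"
      using ucb e unfolding uniformly_continuous_on_def by metis
    obtain d2 where d2: "d2 > 0" "\<And>x x'. x \<in> {0..t} \<Longrightarrow> x' \<in> {0..t} \<Longrightarrow> dist x' x < d2 \<Longrightarrow> dist (c x') (c x) < e"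
      using ucc e unfolding uniformly_continuous_on_def by metis
    obtain N :: nat where N: "real N > t / min d1 d2" using reals_Archimedean2 by blast
    show "\<exists>no. \<forall>n\<ge>no. dist (\<Sum>l<n. exp (\<theta> * (real l * t / real n)) * (b (real (Suc l) * t / real n) - b (real l * t / real n))) (exp (\<theta> * t) * u t) < r"
    proof (intro exI[of _ "N"] allI impI)
      fix n assume nN: "n \<ge> N"
      have mpos: "min d1 d2 > 0" using d1 d2 by auto
      have "t / min d1 d2 > 0" using tp mpos by auto
      then have npos: "real n > 0" using N nN by linarith
      have "real n > t / min d1 d2" using N nN by linarith
      then have "t < min d1 d2 * real n" using npos mpos tp
        by (simp add: pos_divide_less_eq mult.commute)
      then have small: "t / real n < min d1 d2" using npos
        by (rule pos_divide_less_eq[THEN iffD2, rotated])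
      define rr where "rr l = real l * t / real n" for l
      have rr_Suc: "rr (Suc l) - rr l = t / real n" for l
        unfolding rr_def by (simp add: field_simps add_divide_distrib)
      have rr_in: "rr l \<in> {0..t}" if "l \<le> n" for l
        using that tp npos unfolding rr_def by (auto simp: field_simps)
      have rr_lt: "rr l < rr (Suc l)" for l
      proof -
        have "t / real n > 0" using tp npos by auto
        then show ?thesis using rr_Suc[of l] by linarith
      qed
      have rn: "rr n = t" and r0: "rr 0 = 0" unfolding rr_def using npos by auto
      define Q where "Q = (\<Sum>l<n. b (rr (Suc l)) * (c (rr (Suc l)) - c (rr l)))"
      have R_eq: "(\<Sum>l<n. exp (\<theta> * (real l * t / real n)) * (b (real (Suc l) * t / real n) - b (real l * t / real n)))
          = c t * b t - Q"
        using sum_by_parts_nat[of "\<lambda>l. c (rr l)" "\<lambda>l. b (rr l)" n]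
        unfolding Q_def rr_def[symmetric] c_def[symmetric] using rn r0 b0
        by (simp add: rr_def)
      have K0': "K 0 = 0" unfolding K_def using F0 by simp
      have Kt: "\<theta> * K t = (\<Sum>l<n. \<theta> * (K (rr (Suc l)) - K (rr l)))"
        using sum_lessThan_telescope[of "\<lambda>l. K (rr l)" n] rn r0 K0'
        by (simp add: sum_distrib_left[symmetric])
      have termb: "\<bar>b (rr (Suc l)) * (c (rr (Suc l)) - c (rr l)) - \<theta> * (K (rr (Suc l)) - K (rr l))\<bar>
                   \<le> t / real n * \<theta> * (K0 * e)" if l: "l < n" for l
      proof -
        have in1: "rr l \<in> {0..t}" "rr (Suc l) \<in> {0..t}" using rr_in l by auto
        obtain \<eta> where eta: "rr l < \<eta>" "\<eta> < rr (Suc l)" "c (rr (Suc l)) - c (rr l) = (rr (Suc l) - rr l) * (\<theta> * c \<eta>)"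
          using MVT2[OF rr_lt[of l], of c "\<lambda>s. \<theta> * c s"] cd by blast
        have Kc': "continuous_on {rr l..rr (Suc l)} K"
          using in1 by (intro continuous_on_subset[OF Kc]) auto
        obtain \<xi> where xi: "rr l < \<xi>" "\<xi> < rr (Suc l)" "K (rr (Suc l)) - K (rr l) = (rr (Suc l) - rr l) * (c \<xi> * b \<xi>)"
        proof -
          have "\<And>x. rr l < x \<Longrightarrow> x < rr (Suc l) \<Longrightarrow> (K has_derivative (*) (c x * b x)) (at x)"
          proof -
            fix x assume "rr l < x" "x < rr (Suc l)"
            then have "x > 0" using in1 by auto
            then show "(K has_derivative (*) (c x * b x)) (at x)"
              using Kd[of x] by (simp add: has_field_derivative_def)
          qed
          from mvt[OF rr_lt Kc' this] that show ?thesis by (auto simp: mult.commute)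
        qed
        have etain: "\<eta> \<in> {0..t}" "\<xi> \<in> {0..t}" using eta xi in1 by auto
        have dist1: "dist \<eta> \<xi> < d2" using eta xi rr_Suc[of l] small by (auto simp: dist_real_def)
        have dist2: "dist (rr (Suc l)) \<xi> < d1" using xi rr_Suc[of l] small by (auto simp: dist_real_def)
        have ce: "\<bar>c \<eta> - c \<xi>\<bar> < e" using d2(2)[OF etain(2) etain(1) dist1] by (simp add: dist_real_def)
        have be: "\<bar>b (rr (Suc l)) - b \<xi>\<bar> < e" using d1(2)[OF etain(2) in1(2) dist2] by (simp add: dist_real_def)
        have cxi: "0 < c \<xi>" "c \<xi> \<le> c t" unfolding c_def using etain th by auto
        have bb: "\<bar>b (rr (Suc l))\<bar> \<le> Bb" using Bb in1 by auto
        have "b (rr (Suc l)) * (c (rr (Suc l)) - c (rr l)) - \<theta> * (K (rr (Suc l)) - K (rr l))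
            = t / real n * \<theta> * (b (rr (Suc l)) * (c \<eta> - c \<xi>) + c \<xi> * (b (rr (Suc l)) - b \<xi>))"
          using eta(3) xi(3) rr_Suc[of l] by (simp add: algebra_simps)
        also have "\<bar>\<dots>\<bar> \<le> t / real n * \<theta> * (Bb * e + c t * e)"
        proof -
          have "\<bar>b (rr (Suc l)) * (c \<eta> - c \<xi>)\<bar> \<le> Bb * e"
            unfolding abs_mult using bb ce Bb0 by (intro mult_mono) auto
          moreover have "\<bar>c \<xi> * (b (rr (Suc l)) - b \<xi>)\<bar> \<le> c t * e"
            unfolding abs_mult using cxi be by (intro mult_mono) auto
          ultimately have "\<bar>b (rr (Suc l)) * (c \<eta> - c \<xi>) + c \<xi> * (b (rr (Suc l)) - b \<xi>)\<bar> \<le> Bb * e + c t * e"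
            by linarith
          moreover have "t / real n * \<theta> \<ge> 0" using tp npos th by auto
          moreover have "\<bar>t / real n\<bar> * \<bar>\<theta>\<bar> = t / real n * \<theta>" using tp npos th by simp
          ultimately show ?thesis unfolding abs_mult by (metis mult_left_mono)
        qed
        finally show ?thesis unfolding K0_def by (simp add: algebra_simps)
      qed
      have "\<bar>Q - \<theta> * K t\<bar> = \<bar>\<Sum>l<n. (b (rr (Suc l)) * (c (rr (Suc l)) - c (rr l)) - \<theta> * (K (rr (Suc l)) - K (rr l)))\<bar>"
        unfolding Q_def Kt by (simp add: sum_subtractf)
      also have "\<dots> \<le> (\<Sum>l<n. \<bar>b (rr (Suc l)) * (c (rr (Suc l)) - c (rr l)) - \<theta> * (K (rr (Suc l)) - K (rr l))\<bar>)"
        by (rule sum_abs)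
      also have "\<dots> \<le> (\<Sum>l<n. t / real n * \<theta> * (K0 * e))"
        by (intro sum_mono termb) auto
      also have "\<dots> = t * \<theta> * K0 * e" using npos by simp
      also have "\<dots> = r / 2" unfolding e_def using tp th K0 by (simp add: field_simps)
      finally have "\<bar>Q - \<theta> * K t\<bar> \<le> r / 2" .
      then show "dist (\<Sum>l<n. exp (\<theta> * (real l * t / real n)) * (b (real (Suc l) * t / real n) - b (real l * t / real n))) (exp (\<theta> * t) * u t) < r"
        unfolding R_eq target dist_real_def using r by linarith
    qed
  qed
qed

lemma geom_bound:
  assumes th: "\<theta> > 0" and d: "\<Delta> > 0"
  shows "(\<Sum>l<n. exp (2 * \<theta> * (real l * \<Delta>)) * \<Delta>) \<le> (exp (2 * \<theta> * (real n * \<Delta>)) - 1) / (2 * \<theta>)"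
proof (induction n)
  case 0 then show ?case by simp
next
  case (Suc n)
  have "exp (2 * \<theta> * (real n * \<Delta>)) * \<Delta> \<le> (exp (2 * \<theta> * (real (Suc n) * \<Delta>)) - exp (2 * \<theta> * (real n * \<Delta>))) / (2 * \<theta>)"
  proof -
    have "1 + 2 * \<theta> * \<Delta> \<le> exp (2 * \<theta> * \<Delta>)" by (rule exp_ge_add_one_self)
    then have "exp (2 * \<theta> * (real n * \<Delta>)) * (1 + 2 * \<theta> * \<Delta>) \<le> exp (2 * \<theta> * (real n * \<Delta>)) * exp (2 * \<theta> * \<Delta>)"
      by (intro mult_left_mono) auto
    also have "\<dots> = exp (2 * \<theta> * (real (Suc n) * \<Delta>))"
      by (simp add: exp_add[symmetric] algebra_simps)
    finally show ?thesis using th by (simp add: field_simps)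
  qed
  with Suc show ?case by (simp add: diff_divide_distrib)
qed

lemma bm_prob: "std_brownian_motion M B \<Longrightarrow> prob_space M"
  unfolding std_brownian_motion_def by blast
lemma bm_meas: "std_brownian_motion M B \<Longrightarrow> t \<ge> 0 \<Longrightarrow> B t \<in> borel_measurable M"
  unfolding std_brownian_motion_def by blast
lemma bm_zero: "std_brownian_motion M B \<Longrightarrow> \<omega> \<in> space M \<Longrightarrow> B 0 \<omega> = 0"
  unfolding std_brownian_motion_def by blast
lemma bm_cont: "std_brownian_motion M B \<Longrightarrow> \<omega> \<in> space M \<Longrightarrow> continuous_on {0..} (\<lambda>t. B t \<omega>)"
  unfolding std_brownian_motion_def by blast
lemma bm_dist: "std_brownian_motion M B \<Longrightarrow> 0 \<le> s \<Longrightarrow> s < t \<Longrightarrow>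
    distributed M lborel (\<lambda>\<omega>. B t \<omega> - B s \<omega>) (\<lambda>x. ennreal (normal_density 0 (sqrt (t - s)) x))"
  unfolding std_brownian_motion_def by blast
lemma bm_indep: "std_brownian_motion M B \<Longrightarrow> 0 \<le> ts 0 \<Longrightarrow> (\<And>i. i < n \<Longrightarrow> ts i < ts (Suc i)) \<Longrightarrow>
    prob_space.indep_vars M (\<lambda>_. borel) (\<lambda>i \<omega>. B (ts (Suc i)) \<omega> - B (ts i) \<omega>) {..<n}"
  unfolding std_brownian_motion_def by blast

lemma grid_prob:
  assumes BM: "std_brownian_motion M B" and th: "\<theta> > 0" and T: "T > 0" and x: "x > 0" and n: "n > 0"
  shows "emeasure M {\<omega>\<in>space M. \<exists>i\<le>n. x < \<bar>\<Sum>l<i. exp (\<theta> * (real l * T / real n)) *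
            (B (real (Suc l) * T / real n) \<omega> - B (real l * T / real n) \<omega>)\<bar>}
         \<le> 2 * ennreal (exp (- x\<^sup>2 / (2 * (exp (2 * \<theta> * T) / (2 * \<theta>)))))"
proof -
  have P: "prob_space M" using BM by (rule bm_prob)
  interpret prob_space M by fact
  define r where "r l = real l * T / real n" for l
  define \<Delta> where "\<Delta> = T / real n"
  have Dp: "\<Delta> > 0" unfolding \<Delta>_def using T n by auto
  have rS: "r (Suc l) - r l = \<Delta>" for l unfolding r_def \<Delta>_def by (simp add: field_simps add_divide_distrib)
  have r0: "r 0 = 0" unfolding r_def by simp
  have rinc: "r l < r (Suc l)" for l using rS[of l] Dp by linarith
  have rnn: "r l \<ge> 0" for l unfolding r_def using T by auto
  define X where "X l \<omega> = exp (\<theta> * r l) * (B (r (Suc l)) \<omega> - B (r l) \<omega>)" for l \<omega>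
  define V where "V = exp (2 * \<theta> * T) / (2 * \<theta>)"
  define v where "v l = (exp (\<theta> * r l))\<^sup>2 * \<Delta>" for l
  have Vp: "V > 0" unfolding V_def using th by auto
  have indB: "indep_vars (\<lambda>_. borel) (\<lambda>l \<omega>. B (r (Suc l)) \<omega> - B (r l) \<omega>) {..<n}"
    using bm_indep[OF BM, of r n] r0 rinc by auto
  have indX: "indep_vars (\<lambda>_. borel) X {..<n}"
    unfolding X_def by (rule indep_vars_compose2[OF indB, where Y="\<lambda>l y. exp (\<theta> * r l) * y"]) auto
  have indX': "indep_vars (\<lambda>_. borel) (\<lambda>l \<omega>. - X l \<omega>) {..<n}"
    by (rule indep_vars_compose2[OF indX, where Y="\<lambda>l y. - y"]) auto
  have D: "distributed M lborel (\<lambda>\<omega>. B (r (Suc l)) \<omega> - B (r l) \<omega>) (\<lambda>x. ennreal (normal_density 0 (sqrt \<Delta>) x))" for l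
    using bm_dist[OF BM rnn[of l] rinc[of l]] rS[of l] by simp
  have mgf: "(\<integral>\<^sup>+\<omega>. ennreal (exp (\<mu> * X l \<omega>)) \<partial>M) = ennreal (exp (\<mu>\<^sup>2 * v l / 2))" for l \<mu>
  proof -
    have "(\<integral>\<^sup>+\<omega>. ennreal (exp (\<mu> * X l \<omega>)) \<partial>M) = (\<integral>\<^sup>+\<omega>. ennreal (exp ((\<mu> * exp (\<theta> * r l)) * (B (r (Suc l)) \<omega> - B (r l) \<omega>))) \<partial>M)"
      unfolding X_def by (simp add: mult.assoc)
    also have "\<dots> = ennreal (exp ((\<mu> * exp (\<theta> * r l))\<^sup>2 * (sqrt \<Delta>)\<^sup>2 / 2))"
      by (rule gauss_mgf[OF D]) (use Dp in auto)
    also have "(\<mu> * exp (\<theta> * r l))\<^sup>2 * (sqrt \<Delta>)\<^sup>2 / 2 = \<mu>\<^sup>2 * v l / 2"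
      unfolding v_def using Dp by (simp add: power_mult_distrib)
    finally show ?thesis .
  qed
  have mgf': "(\<integral>\<^sup>+\<omega>. ennreal (exp (\<mu> * - X l \<omega>)) \<partial>M) = ennreal (exp (\<mu>\<^sup>2 * v l / 2))" for l \<mu>
    using mgf[of "-\<mu>" l] by simp
  have vpos: "v l \<ge> 0" for l unfolding v_def using Dp by auto
  have sumv: "(\<Sum>l<n. v l) \<le> V"
  proof -
    have "(\<Sum>l<n. v l) = (\<Sum>l<n. exp (2 * \<theta> * (real l * \<Delta>)) * \<Delta>)"
    proof (intro sum.cong refl)
      fix l
      have e: "\<theta> * r l + \<theta> * r l = 2 * \<theta> * (real l * \<Delta>)" unfolding r_def \<Delta>_def by simp
      show "v l = exp (2 * \<theta> * (real l * \<Delta>)) * \<Delta>"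
        unfolding v_def power2_eq_square exp_add[symmetric] e ..
    qed
    also have "\<dots> \<le> (exp (2 * \<theta> * (real n * \<Delta>)) - 1) / (2 * \<theta>)"
      by (rule geom_bound[OF th Dp])
    also have "\<dots> \<le> V" unfolding V_def \<Delta>_def using n th by (simp add: divide_right_mono)
    finally show ?thesis .
  qed
  have Bm[measurable]: "B (r l) \<in> borel_measurable M" for l by (rule bm_meas[OF BM rnn])
  have Xm[measurable]: "X l \<in> borel_measurable M" for l unfolding X_def by measurable
  have m1: "{\<omega>\<in>space M. \<exists>i\<le>n. x < (\<Sum>l<i. X l \<omega>)} \<in> sets M" by measurable
  have m2: "{\<omega>\<in>space M. \<exists>i\<le>n. x < (\<Sum>l<i. - X l \<omega>)} \<in> sets M" by measurable
  have sub: "{\<omega>\<in>space M. \<exists>i\<le>n. x < \<bar>\<Sum>l<i. X l \<omega>\<bar>}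
      \<subseteq> {\<omega>\<in>space M. \<exists>i\<le>n. x < (\<Sum>l<i. X l \<omega>)} \<union> {\<omega>\<in>space M. \<exists>i\<le>n. x < (\<Sum>l<i. - X l \<omega>)}"
  proof
    fix \<omega> assume "\<omega> \<in> {\<omega>\<in>space M. \<exists>i\<le>n. x < \<bar>\<Sum>l<i. X l \<omega>\<bar>}"
    then obtain i where i: "i \<le> n" "x < \<bar>\<Sum>l<i. X l \<omega>\<bar>" "\<omega> \<in> space M" by blast
    show "\<omega> \<in> {\<omega>\<in>space M. \<exists>i\<le>n. x < (\<Sum>l<i. X l \<omega>)} \<union> {\<omega>\<in>space M. \<exists>i\<le>n. x < (\<Sum>l<i. - X l \<omega>)}"
    proof (cases "0 \<le> (\<Sum>l<i. X l \<omega>)")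
      case True
      then have "x < (\<Sum>l<i. X l \<omega>)" using i by linarith
      then show ?thesis using i by blast
    next
      case False
      then have "x < - (\<Sum>l<i. X l \<omega>)" using i by linarith
      then have "x < (\<Sum>l<i. - X l \<omega>)" by (simp only: sum_negf)
      then show ?thesis using i by blast
    qed
  qed
  have "emeasure M {\<omega>\<in>space M. \<exists>i\<le>n. x < \<bar>\<Sum>l<i. X l \<omega>\<bar>}
      \<le> emeasure M ({\<omega>\<in>space M. \<exists>i\<le>n. x < (\<Sum>l<i. X l \<omega>)} \<union> {\<omega>\<in>space M. \<exists>i\<le>n. x < (\<Sum>l<i. - X l \<omega>)})"
    by (rule emeasure_mono[OF sub sets.Un[OF m1 m2]])
  also have "\<dots> \<le> emeasure M {\<omega>\<in>space M. \<exists>i\<le>n. x < (\<Sum>l<i. X l \<omega>)} + emeasure M {\<omega>\<in>space M. \<exists>i\<le>n. x < (\<Sum>l<i. - X l \<omega>)}"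
    using m1 m2 by (rule emeasure_subadditive)
  also have "\<dots> \<le> ennreal (exp (- x\<^sup>2 / (2*V))) + ennreal (exp (- x\<^sup>2 / (2*V)))"
  proof (rule add_mono)
    show "emeasure M {\<omega>\<in>space M. \<exists>i\<le>n. x < (\<Sum>l<i. X l \<omega>)} \<le> ennreal (exp (- x\<^sup>2 / (2*V)))"
      by (rule maximal_ineq[OF P indX _ vpos x sumv Vp]) (rule mgf)
    show "emeasure M {\<omega>\<in>space M. \<exists>i\<le>n. x < (\<Sum>l<i. - X l \<omega>)} \<le> ennreal (exp (- x\<^sup>2 / (2*V)))"
      by (rule maximal_ineq[OF P indX' _ vpos x sumv Vp]) (rule mgf')
  qed
  also have "\<dots> = 2 * ennreal (exp (- x\<^sup>2 / (2*V)))" by (rule mult_2[symmetric])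
  finally show ?thesis unfolding V_def X_def r_def .
qed

lemma incl:
  fixes b u :: "real \<Rightarrow> real"
  assumes cu: "continuous_on {0..} u" and cb: "continuous_on {0..} b" and b0: "b 0 = 0"
    and eq: "\<And>s. s \<ge> 0 \<Longrightarrow> u s = - \<theta> * integral {0..s} u + b s"
    and th: "\<theta> > 0" and T: "T > 0" and x: "x > 0"
    and t0: "0 \<le> t0" "t0 \<le> T" and big: "x < \<bar>exp (\<theta> * t0) * u t0\<bar>"
  shows "\<exists>m. \<forall>N\<ge>m. \<exists>i\<le>2^N. x < \<bar>\<Sum>l<i. exp (\<theta> * (real l * T / real (2^N))) *
            (b (real (Suc l) * T / real (2^N)) - b (real l * T / real (2^N)))\<bar>"
proof -
  define Mf where "Mf t = exp (\<theta> * t) * u t" for t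
  have u0: "u 0 = 0" using eq[of 0] b0 by simp
  have Mf0: "Mf 0 = 0" unfolding Mf_def u0 by simp
  have cM: "continuous_on {0..T} Mf" unfolding Mf_def
    by (intro continuous_intros continuous_on_subset[OF cu]) auto
  have "continuous (at t0 within {0..T}) Mf" using cM t0 by (simp add: continuous_on_eq_continuous_within)
  moreover have gap: "\<bar>Mf t0\<bar> - x > 0" using big unfolding Mf_def by simp
  ultimately obtain d where d: "d > 0" "\<And>t. t \<in> {0..T} \<Longrightarrow> dist t t0 < d \<Longrightarrow> dist (Mf t) (Mf t0) < \<bar>Mf t0\<bar> - x"
    unfolding continuous_within_eps_delta by metis
  have near: "x < \<bar>Mf t\<bar>" if "t \<in> {0..T}" "dist t t0 < d" for t
    using d(2)[OF that] by (simp add: dist_real_def)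
  obtain N0 :: nat where N0: "T / d < 2 ^ N0" using real_arch_pow[of 2 "T/d"] by auto
  have p0: "(2::real) ^ N0 > 0" by simp
  have small: "T / 2 ^ N0 < d" using N0 d p0 by (simp add: field_simps)
  define q where "q = t0 * 2 ^ N0 / T"
  have q0: "q \<ge> 0" unfolding q_def using t0 T by simp
  have qle: "q \<le> 2 ^ N0" unfolding q_def using t0 T by (simp add: field_simps)
  define j where "j = nat \<lfloor>q\<rfloor>"
  have jr: "real j = of_int \<lfloor>q\<rfloor>" unfolding j_def using q0 by simp
  have jle: "real j \<le> q" "q < real j + 1" using jr by linarith+
  define t' where "t' = real j * T / 2 ^ N0"
  have t'le: "t' \<le> t0" unfolding t'_def using jle(1) T p0 unfolding q_def by (simp add: field_simps)
  have t'gt: "t0 - t' < T / 2 ^ N0"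
  proof -
    have "t0 * 2 ^ N0 < (real j + 1) * T" using jle(2) T unfolding q_def by (simp add: divide_less_eq)
    then have "t0 * 2 ^ N0 - real j * T < T" by (simp add: algebra_simps)
    then have "(t0 * 2 ^ N0 - real j * T) / 2 ^ N0 < T / 2 ^ N0" using p0 by (simp add: divide_strict_right_mono)
    moreover have "(t0 * 2 ^ N0 - real j * T) / 2 ^ N0 = t0 - t'" unfolding t'_def using p0 by (simp add: field_simps)
    ultimately show ?thesis by simp
  qed
  have t'0: "t' \<ge> 0" unfolding t'_def using T by simp
  have jN: "j \<le> 2 ^ N0"
  proof -
    have "real j \<le> 2 ^ N0" using jle(1) qle by linarith
    then have "real j \<le> real ((2::nat) ^ N0)" by simp
    then show ?thesis by (simp only: of_nat_le_iff)
  qed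
  have t'T: "t' \<le> T" using t'le t0 by linarith
  have "dist t' t0 = t0 - t'" using t'le by (simp add: dist_real_def)
  then have "dist t' t0 < d" using t'gt small by linarith
  then have xt': "x < \<bar>Mf t'\<bar>" using near[of t'] t'0 t'T by simp
  have j1: "j \<ge> 1"
  proof (rule ccontr)
    assume "\<not> j \<ge> 1" then have "j = 0" by simp
    then have "t' = 0" unfolding t'_def by simp
    then show False using xt' Mf0 x by simp
  qed
  have t'p: "t' > 0" unfolding t'_def using j1 T by simp
  define R where "R n = (\<Sum>l<n. exp (\<theta> * (real l * t' / real n)) * (b (real (Suc l) * t' / real n) - b (real l * t' / real n)))" for n
  have conv: "R \<longlonglongrightarrow> Mf t'" unfolding R_def Mf_def
    by (rule path_conv[OF cu cb b0 eq th t'p])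
  define g where "g m = j * 2 ^ m" for m :: nat
  have sm: "strict_mono g" unfolding g_def using j1 by (intro strict_monoI) auto
  have "(R \<circ> g) \<longlonglongrightarrow> Mf t'" by (rule LIMSEQ_subseq_LIMSEQ[OF conv sm])
  then have "(\<lambda>m. \<bar>(R \<circ> g) m\<bar>) \<longlonglongrightarrow> \<bar>Mf t'\<bar>" by (rule tendsto_rabs)
  from order_tendstoD(1)[OF this xt'] obtain m1 where m1: "\<And>m. m \<ge> m1 \<Longrightarrow> x < \<bar>R (g m)\<bar>"
    unfolding eventually_sequentially by auto
  show ?thesis
  proof (rule exI[of _ "N0 + m1"], intro allI impI)
    fix N assume N: "N \<ge> N0 + m1"
    define m where "m = N - N0"
    have Nm: "N = N0 + m" and mm: "m \<ge> m1" using N unfolding m_def by auto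
    have ile: "g m \<le> 2 ^ N" unfolding g_def Nm power_add by (rule mult_right_mono[OF jN]) simp
    have gr: "real l * t' / real (g m) = real l * T / real (2 ^ N)" for l
    proof -
      have e1: "real (j * 2 ^ m) = real j * 2 ^ m" by simp
      have e2: "real ((2::nat) ^ (N0 + m)) = 2 ^ N0 * 2 ^ m" by (simp add: power_add)
      show ?thesis unfolding g_def t'_def Nm e1 e2 using j1 by (simp add: field_simps)
    qed
    have Req: "R (g m) = (\<Sum>l<g m. exp (\<theta> * (real l * T / real (2^N))) * (b (real (Suc l) * T / real (2^N)) - b (real l * T / real (2^N))))"
      unfolding R_def gr by (rule refl)
    show "\<exists>i\<le>2^N. x < \<bar>\<Sum>l<i. exp (\<theta> * (real l * T / real (2^N))) *
            (b (real (Suc l) * T / real (2^N)) - b (real l * T / real (2^N)))\<bar>"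
    proof -
      have "x < \<bar>R (g m)\<bar>" by (rule m1[OF mm])
      then have "x < \<bar>\<Sum>l<g m. exp (\<theta> * (real l * T / real (2^N))) * (b (real (Suc l) * T / real (2^N)) - b (real l * T / real (2^N)))\<bar>"
        by (simp only: Req)
      then show ?thesis using ile by blast
    qed
  qed
qed

lemma exit_bound:
  fixes u :: "real \<Rightarrow> real"
  assumes c: "c > 0" and h: "h > 0"
  shows "ennreal (exp_neg c (exit_time a u)) \<le> (\<Sum>k. ennreal (exp (- c * h * real k)) *
     (if \<exists>t. real k * h \<le> t \<and> t \<le> real (Suc k) * h \<and> u t \<notin> {-a<..<a} then 1 else 0))"
proof -
  define S where "S = {ereal t | t. t \<ge> 0 \<and> u t \<notin> {-a<..<a}}"
  define H where "H = Inf S"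
  have He: "exit_time a u = H" unfolding H_def S_def exit_time_def by simp
  show ?thesis
  proof (cases "H = \<infinity>")
    case True
    then show ?thesis unfolding He exp_neg_def by simp
  next
    case False
    have H0: "0 \<le> H" unfolding H_def S_def by (rule Inf_greatest) auto
    then obtain h0 where h0: "H = ereal h0" using False by (cases H) auto
    have h00: "h0 \<ge> 0" using H0 h0 by simp
    define k where "k = nat \<lfloor>h0 / h\<rfloor>"
    have kr: "real k = of_int \<lfloor>h0 / h\<rfloor>" unfolding k_def using h00 h by simp
    have k1: "real k * h \<le> h0"
    proof -
      have "real k \<le> h0 / h" using kr by linarith
      then show ?thesis using h by (simp add: pos_le_divide_eq)
    qed
    have k2: "h0 < real (Suc k) * h"
    proof -
      have "h0 / h < real k + 1" using kr by linarith
      then show ?thesis using h by (simp add: pos_divide_less_eq algebra_simps)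
    qed
    have "Inf S < ereal (real (Suc k) * h)" using k2 h0 unfolding H_def by simp
    then obtain s where s: "s \<in> S" "s < ereal (real (Suc k) * h)" by (auto simp: Inf_less_iff)
    then obtain t where t: "s = ereal t" "t \<ge> 0" "u t \<notin> {-a<..<a}" unfolding S_def by auto
    have "H \<le> s" unfolding H_def using s(1) by (rule Inf_lower)
    then have th0: "h0 \<le> t" using h0 t by simp
    have cond: "\<exists>t. real k * h \<le> t \<and> t \<le> real (Suc k) * h \<and> u t \<notin> {-a<..<a}"
      using k1 th0 s(2) t by (intro exI[of _ t]) auto
    have "ennreal (exp_neg c (exit_time a u)) = ennreal (exp (- c * h0))"
      unfolding He exp_neg_def using h0 by simp
    also have "\<dots> \<le> ennreal (exp (- c * h * real k))"
      using k1 c by (intro ennreal_leI) (simp add: mult.assoc mult.commute[of h])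
    also have "\<dots> = ennreal (exp (- c * h * real k)) *
       (if \<exists>t. real k * h \<le> t \<and> t \<le> real (Suc k) * h \<and> u t \<notin> {-a<..<a} then 1 else 0)"
      using cond by simp
    also have "\<dots> \<le> (\<Sum>k. ennreal (exp (- c * h * real k)) *
       (if \<exists>t. real k * h \<le> t \<and> t \<le> real (Suc k) * h \<and> u t \<notin> {-a<..<a} then 1 else 0))"
      using sum_le_suminf[OF summableI, of "{k}" "\<lambda>k. ennreal (exp (- c * h * real k)) *
       (if \<exists>t. real k * h \<le> t \<and> t \<le> real (Suc k) * h \<and> u t \<notin> {-a<..<a} then 1 else 0)"] by simp
    finally show ?thesis .
  qed
qed

lemma exp_neg_le1: "exp_neg c (exit_time a u) \<le> 1" if "c \<ge> 0"
proof -
  have "0 \<le> exit_time a u" unfolding exit_time_def by (rule Inf_greatest) auto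
  then have "real_of_ereal (exit_time a u) \<ge> 0" by (simp add: real_of_ereal_pos)
  then show ?thesis unfolding exp_neg_def using that by (auto simp: mult_nonneg_nonneg)
qed

lemma final_arith:
  fixes b \<nu> :: real
  assumes b: "b > 1" and nu: "0 < \<nu>" "\<nu> < 1"
  shows "min 1 (2 * exp 2 * exp (- b\<^sup>2 / 2) / (1 - exp (- (\<nu> / b\<^sup>2)))) \<le> 8 * exp 2 / (1 + \<nu> / b\<^sup>2 * exp (b\<^sup>2 / 2))"
proof -
  define y where "y = \<nu> / b\<^sup>2"
  define X where "X = y * exp (b\<^sup>2 / 2)"
  have b2: "b\<^sup>2 > 1" using b by (simp add: one_less_power)
  have y: "0 < y" "y < 1" unfolding y_def using nu b2 by (auto simp: divide_less_eq intro!: divide_pos_pos)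
  have "1 + y \<le> exp y" by (rule exp_ge_add_one_self)
  then have ey: "exp (- y) \<le> 1 / (1 + y)" using y by (simp add: exp_minus field_simps)
  have q: "1 - exp (- y) \<ge> y / 2"
  proof -
    have yy: "y * y \<le> 1 * y" using y by (intro mult_right_mono) auto
    have "1 \<le> (1 - y / 2) * (1 + y)" using yy by (simp add: algebra_simps)
    then have "1 / (1 + y) \<le> 1 - y / 2" using y by (simp add: pos_divide_le_eq)
    then show ?thesis using ey by linarith
  qed
  have qp: "1 - exp (- y) > 0" using q y by linarith
  have E: "exp (- b\<^sup>2 / 2) = 1 / exp (b\<^sup>2 / 2)" by (simp add: exp_minus field_simps)
  have Xp: "X > 0" unfolding X_def using y by simp
  have bound: "2 * exp 2 * exp (- b\<^sup>2 / 2) / (1 - exp (- y)) \<le> 4 * exp 2 / X"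
  proof -
    have "2 * exp 2 * exp (- b\<^sup>2 / 2) / (1 - exp (- y)) \<le> 2 * exp 2 * exp (- b\<^sup>2 / 2) / (y / 2)"
      using q y by (intro divide_left_mono) auto
    also have "\<dots> = 4 * exp 2 / X" unfolding X_def E using y by (simp add: field_simps)
    finally show ?thesis .
  qed
  have e2: "exp (2::real) \<ge> 1" by simp
  show ?thesis
  proof (cases "X \<ge> 1")
    case True
    have "4 * exp 2 / X \<le> 8 * exp 2 / (1 + X)" using True Xp by (simp add: field_simps)
    then show ?thesis using bound unfolding X_def y_def by linarith
  next
    case False
    have "1 + X \<le> 8 * exp 2" using False e2 by linarith
    then have "1 \<le> 8 * exp 2 / (1 + X)" using Xp by (simp add: field_simps)
    then show ?thesis unfolding X_def y_def by linarith
  qed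
qed

lemma main_bound:
  assumes BM: "std_brownian_motion M B" and OU: "ou_process M \<theta> B U" and th: "\<theta> > 0"
    and nu: "0 < \<nu>" "\<nu> < 1" and b: "b > 1"
  shows "(\<integral>\<^sup>+\<omega>. ennreal (exp_neg (\<theta> * \<nu>) (exit_time (b / sqrt (2 * \<theta>)) (\<lambda>t. U t \<omega>))) \<partial>M)
       \<le> ennreal (8 * exp 2 / (1 + \<nu> / b\<^sup>2 * exp (b\<^sup>2 / 2)))"
proof -
  have P: "prob_space M" by (rule bm_prob[OF BM])
  interpret prob_space M by fact
  define a where "a = b / sqrt (2 * \<theta>)"
  define \<delta> where "\<delta> = 1 / b\<^sup>2"
  define h where "h = \<delta> / \<theta>"
  define T where "T k = real (Suc k) * h" for k :: nat
  define xk where "xk k = a * exp (\<theta> * (real k * h)) * exp (- \<delta>)" for k :: nat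
  define E where "E k N = {\<omega>\<in>space M. \<exists>i\<le>2^N. xk k < \<bar>\<Sum>l<i. exp (\<theta> * (real l * T k / real (2^N))) *
            (B (real (Suc l) * T k / real (2^N)) \<omega> - B (real l * T k / real (2^N)) \<omega>)\<bar>}" for k N
  define G where "G k = (\<Union>m. \<Inter>N. E k (N + m))" for k
  define p where "p = 2 * exp 2 * exp (- b\<^sup>2 / 2)"
  have b2: "b\<^sup>2 > 1" using b by (simp add: one_less_power)
  have ap: "a > 0" unfolding a_def using b th by simp
  have dp: "\<delta> > 0" unfolding \<delta>_def using b2 b by simp
  have hp: "h > 0" unfolding h_def using dp th by simp
  have Tp: "T k > 0" for k unfolding T_def using hp by simp
  have xp: "xk k > 0" for k unfolding xk_def using ap by simp
  have thh: "\<theta> * h = \<delta>" unfolding h_def using th by simp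
  have Bm[measurable]: "B (real l * T k / real (2^N)) \<in> borel_measurable M" for l k N
    using Tp[of k] by (intro bm_meas[OF BM]) simp
  have Bm'[measurable]: "B (real (Suc l) * T k / real (2^N)) \<in> borel_measurable M" for l k N
    using Tp[of k] by (intro bm_meas[OF BM]) simp
  have Em[measurable]: "E k N \<in> sets M" for k N unfolding E_def by measurable
  have Gm[measurable]: "G k \<in> sets M" for k unfolding G_def by measurable
  have key: "(xk k)\<^sup>2 / (2 * (exp (2 * \<theta> * T k) / (2 * \<theta>))) = b\<^sup>2 / 2 * exp (- 4 * \<delta>)" for k
  proof -
    have x1: "xk k = a * exp (real k * \<delta> - \<delta>)"
    proof -
      have "\<theta> * (real k * h) = real k * \<delta>" using thh by (metis mult.left_commute)
      moreover have "exp (real k * \<delta> - \<delta>) = exp (real k * \<delta>) * exp (- \<delta>)"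
        using exp_add[of "real k * \<delta>" "- \<delta>"] by simp
      ultimately show ?thesis unfolding xk_def by (simp add: mult.assoc)
    qed
    have sq: "(exp z)\<^sup>2 = exp (2 * z)" for z :: real
      by (simp add: power2_eq_square exp_add[symmetric])
    have a2: "a\<^sup>2 = b\<^sup>2 / (2 * \<theta>)" unfolding a_def using th by (simp add: power_divide)
    have x2: "(xk k)\<^sup>2 = b\<^sup>2 / (2 * \<theta>) * exp (2 * (real k * \<delta> - \<delta>))"
      unfolding x1 power_mult_distrib a2 sq ..
    have t2: "2 * \<theta> * T k = 2 * (real k * \<delta> - \<delta>) + 4 * \<delta>"
    proof -
      have "2 * \<theta> * T k = 2 * (real k + 1) * (\<theta> * h)" unfolding T_def by (simp add: algebra_simps)
      also have "\<dots> = 2 * (real k + 1) * \<delta>" using thh by simp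
      also have "\<dots> = 2 * (real k * \<delta> - \<delta>) + 4 * \<delta>" by (simp add: algebra_simps)
      finally show ?thesis .
    qed
    have "exp (2 * (real k * \<delta> - \<delta>)) / exp (2 * \<theta> * T k) = exp (- 4 * \<delta>)"
      unfolding t2 exp_add by (simp add: exp_minus field_simps)
    then show ?thesis unfolding x2 using th by (simp add: field_simps)
  qed
  have pE: "emeasure M (E k N) \<le> ennreal p" for k N
  proof -
    have g: "emeasure M (E k N) \<le> 2 * ennreal (exp (- (xk k)\<^sup>2 / (2 * (exp (2 * \<theta> * T k) / (2 * \<theta>)))))"
      unfolding E_def by (rule grid_prob[OF BM th Tp xp]) simp
    have s1: "- (xk k)\<^sup>2 / (2 * (exp (2 * \<theta> * T k) / (2 * \<theta>))) = - (b\<^sup>2 / 2 * exp (- 4 * \<delta>))"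
      by (simp only: minus_divide_left[symmetric] key)
    have "b\<^sup>2 / 2 * (1 + - 4 * \<delta>) \<le> b\<^sup>2 / 2 * exp (- 4 * \<delta>)"
      by (rule mult_left_mono[OF exp_ge_add_one_self]) simp
    moreover have "b\<^sup>2 / 2 * (4 * \<delta>) = 2" unfolding \<delta>_def using b by simp
    moreover have "b\<^sup>2 / 2 * (1 + - 4 * \<delta>) = b\<^sup>2 / 2 - b\<^sup>2 / 2 * (4 * \<delta>)" by algebra
    ultimately have "- (b\<^sup>2 / 2 * exp (- 4 * \<delta>)) \<le> 2 + - b\<^sup>2 / 2" by linarith
    then have "exp (- (xk k)\<^sup>2 / (2 * (exp (2 * \<theta> * T k) / (2 * \<theta>)))) \<le> exp (2 + - b\<^sup>2 / 2)"
      unfolding s1 by (rule exp_mono)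
    also have "\<dots> = exp 2 * exp (- b\<^sup>2 / 2)" by (rule exp_add)
    finally have "2 * ennreal (exp (- (xk k)\<^sup>2 / (2 * (exp (2 * \<theta> * T k) / (2 * \<theta>))))) \<le> 2 * ennreal (exp 2 * exp (- b\<^sup>2 / 2))"
      by (intro mult_left_mono ennreal_leI) auto
    also have "\<dots> = ennreal p"
    proof -
      have "ennreal p = ennreal 2 * ennreal (exp 2 * exp (- b\<^sup>2 / 2))"
        unfolding p_def by (subst ennreal_mult[symmetric]) (auto simp: mult.assoc)
      then show ?thesis by simp
    qed
    finally show ?thesis using g by (rule order_trans[rotated])
  qed
  have pG: "emeasure M (G k) \<le> ennreal p" for k
  proof -
    define C where "C m = (\<Inter>N. E k (N + m))" for m
    have Cm: "C m \<in> sets M" for m unfolding C_def by measurable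
    have inc: "incseq C" unfolding C_def
      by (intro monoI) (auto, metis add.assoc add.commute le_add_diff_inverse)
    have "emeasure M (G k) = (SUP m. emeasure M (C m))"
      unfolding G_def C_def[symmetric] using Cm inc by (intro SUP_emeasure_incseq[symmetric]) auto
    also have "\<dots> \<le> ennreal p"
    proof (rule SUP_least)
      fix m
      have "C m \<subseteq> E k m" unfolding C_def using INT_lower[of 0 UNIV "\<lambda>N. E k (N + m)"] by simp
      then have "emeasure M (C m) \<le> emeasure M (E k m)" by (intro emeasure_mono) auto
      then show "emeasure M (C m) \<le> ennreal p" using pE[of k m] by (rule order_trans)
    qed
    finally show ?thesis .
  qed
  have pw: "ennreal (exp_neg (\<theta> * \<nu>) (exit_time a (\<lambda>t. U t \<omega>)))
      \<le> (\<Sum>k. ennreal (exp (- (\<theta> * \<nu>) * h * real k)) * indicator (G k) \<omega>)" if w: "\<omega> \<in> space M" for \<omega>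
  proof -
    have cu: "continuous_on {0..} (\<lambda>t. U t \<omega>)" and eq: "\<And>s. s \<ge> 0 \<Longrightarrow> U s \<omega> = - \<theta> * integral {0..s} (\<lambda>t. U t \<omega>) + B s \<omega>"
      using OU w unfolding ou_process_def by auto
    have cb: "continuous_on {0..} (\<lambda>t. B t \<omega>)" by (rule bm_cont[OF BM w])
    have b0: "B 0 \<omega> = 0" by (rule bm_zero[OF BM w])
    have ind: "(if \<exists>t. real k * h \<le> t \<and> t \<le> real (Suc k) * h \<and> U t \<omega> \<notin> {-a<..<a} then 1 else 0) \<le> (indicator (G k) \<omega> :: ennreal)" for k
    proof (cases "\<exists>t. real k * h \<le> t \<and> t \<le> real (Suc k) * h \<and> U t \<omega> \<notin> {-a<..<a}")
      case False then show ?thesis by (simp only: if_not_P[OF False]) simp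
    next
      case True
      then obtain t where t: "real k * h \<le> t" "t \<le> real (Suc k) * h" "U t \<omega> \<notin> {-a<..<a}" by blast
      have t0: "0 \<le> t" using t(1) hp by (meson order_trans mult_nonneg_nonneg of_nat_0_le_iff less_imp_le)
      have tT: "t \<le> T k" unfolding T_def using t(2) .
      have Ua: "a \<le> \<bar>U t \<omega>\<bar>" using t(3) by auto
      have "exp (\<theta> * (real k * h)) \<le> exp (\<theta> * t)" using t(1) th by simp
      then have "exp (\<theta> * (real k * h)) * a \<le> exp (\<theta> * t) * \<bar>U t \<omega>\<bar>"
        using Ua ap by (intro mult_mono) auto
      moreover have "xk k < exp (\<theta> * (real k * h)) * a"
      proof -
        have "exp (- \<delta>) < 1" using dp by simp
        then have "a * exp (\<theta> * (real k * h)) * exp (- \<delta>) < a * exp (\<theta> * (real k * h)) * 1"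
          using ap by (intro mult_strict_left_mono) auto
        then show ?thesis unfolding xk_def by (simp add: mult.commute)
      qed
      ultimately have big: "xk k < \<bar>exp (\<theta> * t) * U t \<omega>\<bar>" by (simp add: abs_mult)
      obtain m where m: "\<And>N. N \<ge> m \<Longrightarrow> \<exists>i\<le>2^N. xk k < \<bar>\<Sum>l<i. exp (\<theta> * (real l * T k / real (2^N))) *
            (B (real (Suc l) * T k / real (2^N)) \<omega> - B (real l * T k / real (2^N)) \<omega>)\<bar>"
        using incl[of "\<lambda>t. U t \<omega>" "\<lambda>t. B t \<omega>" \<theta> "T k" "xk k" t, OF cu cb b0 eq th Tp xp t0 tT big] by blast
      have "\<omega> \<in> E k (N + m)" for N unfolding E_def using m[of "N + m"] w by auto
      then have "\<omega> \<in> G k" unfolding G_def by blast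
      then show ?thesis by simp
    qed
    have "ennreal (exp_neg (\<theta> * \<nu>) (exit_time a (\<lambda>t. U t \<omega>))) \<le> (\<Sum>k. ennreal (exp (- (\<theta> * \<nu>) * h * real k)) *
     (if \<exists>t. real k * h \<le> t \<and> t \<le> real (Suc k) * h \<and> U t \<omega> \<notin> {-a<..<a} then 1 else 0))"
      using exit_bound[of "\<theta> * \<nu>" h a "\<lambda>t. U t \<omega>"] th nu hp by simp
    also have "\<dots> \<le> (\<Sum>k. ennreal (exp (- (\<theta> * \<nu>) * h * real k)) * indicator (G k) \<omega>)"
      by (intro suminf_le summableI mult_left_mono ind) auto
    finally show ?thesis .
  qed
  have "(\<integral>\<^sup>+\<omega>. ennreal (exp_neg (\<theta> * \<nu>) (exit_time a (\<lambda>t. U t \<omega>))) \<partial>M)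
      \<le> (\<integral>\<^sup>+\<omega>. (\<Sum>k. ennreal (exp (- (\<theta> * \<nu>) * h * real k)) * indicator (G k) \<omega>) \<partial>M)"
    by (intro nn_integral_mono pw)
  also have "\<dots> = (\<Sum>k. \<integral>\<^sup>+\<omega>. ennreal (exp (- (\<theta> * \<nu>) * h * real k)) * indicator (G k) \<omega> \<partial>M)"
    by (intro nn_integral_suminf) measurable
  also have "\<dots> = (\<Sum>k. ennreal (exp (- (\<theta> * \<nu>) * h * real k)) * emeasure M (G k))"
    by (intro suminf_cong nn_integral_cmult_indicator Gm)
  also have "\<dots> \<le> (\<Sum>k. ennreal (exp (- (\<theta> * \<nu>) * h * real k)) * ennreal p)"
    by (intro suminf_le summableI mult_left_mono pG) auto
  also have "\<dots> = ennreal (p / (1 - exp (- (\<nu> / b\<^sup>2))))"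
  proof -
    define r where "r = exp (- (\<nu> / b\<^sup>2))"
    have r: "exp (- (\<theta> * \<nu>) * h * real k) = r ^ k" for k
    proof -
      have "- (\<theta> * \<nu>) * h * real k = real k * (- (\<nu> / b\<^sup>2))"
        using thh unfolding \<delta>_def by (simp add: algebra_simps)
      then have "exp (- (\<theta> * \<nu>) * h * real k) = exp (real k * (- (\<nu> / b\<^sup>2)))" by (rule arg_cong)
      also have "\<dots> = r ^ k" unfolding r_def by (rule exp_of_nat_mult)
      finally show ?thesis .
    qed
    have r1: "norm r < 1" unfolding r_def using nu b by simp
    have p0: "p \<ge> 0" unfolding p_def by simp
    have "(\<lambda>k. p * r ^ k) sums (p * (1 / (1 - r)))"
      by (intro sums_mult geometric_sums r1)
    then have "(\<Sum>k. ennreal (p * r ^ k)) = ennreal (p * (1 / (1 - r)))"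
      using p0 r1 by (intro suminf_ennreal_eq) (auto simp: r_def)
    moreover have "(\<Sum>k. ennreal (exp (- (\<theta> * \<nu>) * h * real k)) * ennreal p) = (\<Sum>k. ennreal (p * r ^ k))"
    proof (rule suminf_cong)
      fix k
      have "r ^ k \<ge> 0" unfolding r_def by simp
      then show "ennreal (exp (- (\<theta> * \<nu>) * h * real k)) * ennreal p = ennreal (p * r ^ k)"
        unfolding r using p0 by (simp add: ennreal_mult[symmetric] mult.commute)
    qed
    ultimately show ?thesis unfolding r_def by simp
  qed
  finally have I1: "(\<integral>\<^sup>+\<omega>. ennreal (exp_neg (\<theta> * \<nu>) (exit_time a (\<lambda>t. U t \<omega>))) \<partial>M) \<le> ennreal (p / (1 - exp (- (\<nu> / b\<^sup>2))))" .
  have I2: "(\<integral>\<^sup>+\<omega>. ennreal (exp_neg (\<theta> * \<nu>) (exit_time a (\<lambda>t. U t \<omega>))) \<partial>M) \<le> 1"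
  proof -
    have "(\<integral>\<^sup>+\<omega>. ennreal (exp_neg (\<theta> * \<nu>) (exit_time a (\<lambda>t. U t \<omega>))) \<partial>M) \<le> (\<integral>\<^sup>+\<omega>. 1 \<partial>M)"
      using th nu by (intro nn_integral_mono) (simp add: exp_neg_le1)
    also have "\<dots> = 1" by (simp add: emeasure_space_1)
    finally show ?thesis .
  qed
  have "(\<integral>\<^sup>+\<omega>. ennreal (exp_neg (\<theta> * \<nu>) (exit_time a (\<lambda>t. U t \<omega>))) \<partial>M) \<le> ennreal (min 1 (p / (1 - exp (- (\<nu> / b\<^sup>2)))))"
    using I1 I2 by (cases "1 \<le> p / (1 - exp (- (\<nu> / b\<^sup>2)))") (auto simp: min_def)
  also have "\<dots> \<le> ennreal (8 * exp 2 / (1 + \<nu> / b\<^sup>2 * exp (b\<^sup>2 / 2)))"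
    using final_arith[OF b nu] unfolding p_def by (intro ennreal_leI) simp
  finally show ?thesis unfolding a_def .
qed

theorem proposition3p9:
  "\<exists>C>0. \<exists>b0>0. \<forall>(M :: 'a measure) B U \<theta> \<nu> b.
     std_brownian_motion M B \<and> ou_process M \<theta> B U \<and>
     \<theta> > 0 \<and> 0 < \<nu> \<and> \<nu> < 1 \<and> b > b0 \<longrightarrow>
     (\<integral>\<^sup>+ \<omega>. ennreal (exp_neg (\<theta> * \<nu>) (exit_time (b / sqrt (2 * \<theta>)) (\<lambda>t. U t \<omega>))) \<partial>M)
       \<le> ennreal (C / (1 + \<nu> / b\<^sup>2 * exp (b\<^sup>2 / 2)))"
proof -
  have main: "\<forall>(M :: 'a measure) B U \<theta> \<nu> b.
     std_brownian_motion M B \<and> ou_process M \<theta> B U \<and>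
     \<theta> > 0 \<and> 0 < \<nu> \<and> \<nu> < 1 \<and> b > 1 \<longrightarrow>
     (\<integral>\<^sup>+ \<omega>. ennreal (exp_neg (\<theta> * \<nu>) (exit_time (b / sqrt (2 * \<theta>)) (\<lambda>t. U t \<omega>))) \<partial>M)
       \<le> ennreal (8 * exp 2 / (1 + \<nu> / b\<^sup>2 * exp (b\<^sup>2 / 2)))"
    using main_bound by blast
  show ?thesis
    apply (rule exI[of _ "8 * exp 2"], rule conjI, simp)
    apply (rule exI[of _ "1::real"], rule conjI, simp)
    by (rule main)
qed

end
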